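(* Consider the uniform noising process on $[S]^d$ from $q_0$, fix $T>0$, and let $(\overleftarrow x_t)_{t\in[0,T]}$ be its reverse process. Then for all $0\le\ell<t<T$, $i\in[d]$, $c\in[S]$ and $x_\ell\in[S]^d$, $$\mathbb E_{x_t\sim\overleftarrow q_{t\mid\ell}(\cdot\mid x_\ell)}\big[s_{T-t}(x_t\oplus_ic,x_t)\big]=s_{T-\ell}(x_\ell\oplus_ic,x_\ell).$$ Equivalently, for any function $g$ of $x_\ell$, $\mathbb E_{x_t\sim\overleftarrow q_{t\mid\ell}(\cdot\mid x_\ell)}\big[(s_{T-\ell}(x_\ell\oplus_ic,x_\ell)-s_{T-t}(x_t\oplus_ic,x_t))\,g(x_\ell)\big]=0$.
   Context: Uniform noising process: time-homogeneous CTMC on $[S]^d$ with rates $Q(x,y)=1/S$ if $x,y$ are at Hamming distance one, $0$ at Hamming distance $\ge2$; $q_t$ is its time-$t$ law; $s_t(y,x)=q_t(y)/q_t(x)$. Reverse process on $[0,T]$: the CTMC started from $q_T$ with rates $\overleftarrow Q_t(x,y)=Q(y,x)s_{T-t}(y,x)$ for $x\ne y$, whose time-$t$ marginal is $q_{T-t}$; $\overleftarrow q_{t\mid\ell}(\cdot\mid x_\ell)$ is the conditional law of its state at time $t$ given state $x_\ell$ at time $\ell$. $x\oplus_i c$: $x$ with coordinate $i$ replaced by $(x^i+c)\bmod S$, convention $0\bmod S=S$. *)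

theory Defs
  imports "HOL-Analysis.Analysis" "HOL-Library.FuncSet"
begin

definition states :: "nat \<Rightarrow> nat \<Rightarrow> (nat \<Rightarrow> nat) set" where
  "states S d = ({1..d} \<rightarrow>\<^sub>E {1..S})"

definition hamming :: "nat \<Rightarrow> (nat \<Rightarrow> nat) \<Rightarrow> (nat \<Rightarrow> nat) \<Rightarrow> nat" where
  "hamming d x y = card {i \<in> {1..d}. x i \<noteq> y i}"

definition oplus :: "nat \<Rightarrow> (nat \<Rightarrow> nat) \<Rightarrow> nat \<Rightarrow> nat \<Rightarrow> (nat \<Rightarrow> nat)" where
  "oplus S x i c = x(i := (if (x i + c) mod S = 0 then S else (x i + c) mod S))"

definition Qunif :: "nat \<Rightarrow> nat \<Rightarrow> (nat \<Rightarrow> nat) \<Rightarrow> (nat \<Rightarrow> nat) \<Rightarrow> real" where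
  "Qunif S d x y = (if hamming d x y = 1 then 1 / real S else 0)"

definition gen :: "'a set \<Rightarrow> (real \<Rightarrow> 'a \<Rightarrow> 'a \<Rightarrow> real) \<Rightarrow> real \<Rightarrow> 'a \<Rightarrow> 'a \<Rightarrow> real" where
  "gen X R t x y = (if x = y then - (\<Sum>z\<in>X - {x}. R t x z) else R t x y)"

text \<open>P is the transition function (from start time l, over the time set I) of the CTMC
  on the finite state set X with generator A(t): P(l) = identity and the Kolmogorov forward
  equation d/dt P(t)(x,y) = sum_z P(t)(x,z) A(t)(z,y) holds on I; normalised to 0 outside.\<close>
definition is_transition ::
  "'a set \<Rightarrow> (real \<Rightarrow> 'a \<Rightarrow> 'a \<Rightarrow> real) \<Rightarrow> real set \<Rightarrow> real \<Rightarrow> (real \<Rightarrow> 'a \<Rightarrow> 'a \<Rightarrow> real) \<Rightarrow> bool" where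
  "is_transition X A I l P \<longleftrightarrow>
     (\<forall>x\<in>X. \<forall>y\<in>X. P l x y = (if x = y then 1 else 0)) \<and>
     (\<forall>t\<in>I. \<forall>x\<in>X. \<forall>y\<in>X.
        ((\<lambda>s. P s x y) has_real_derivative (\<Sum>z\<in>X. P t x z * A t z y)) (at t within I)) \<and>
     (\<forall>t x y. (t \<notin> I \<or> x \<notin> X \<or> y \<notin> X) \<longrightarrow> P t x y = 0)"

definition transition ::
  "'a set \<Rightarrow> (real \<Rightarrow> 'a \<Rightarrow> 'a \<Rightarrow> real) \<Rightarrow> real set \<Rightarrow> real \<Rightarrow> (real \<Rightarrow> 'a \<Rightarrow> 'a \<Rightarrow> real)" where
  "transition X A I l = (THE P. is_transition X A I l P)"

definition fwd_kernel :: "nat \<Rightarrow> nat \<Rightarrow> real \<Rightarrow> (nat \<Rightarrow> nat) \<Rightarrow> (nat \<Rightarrow> nat) \<Rightarrow> real" where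
  "fwd_kernel S d = transition (states S d) (gen (states S d) (\<lambda>_. Qunif S d)) {0..} 0"

definition qlaw :: "nat \<Rightarrow> nat \<Rightarrow> ((nat \<Rightarrow> nat) \<Rightarrow> real) \<Rightarrow> real \<Rightarrow> (nat \<Rightarrow> nat) \<Rightarrow> real" where
  "qlaw S d q0 t y = (\<Sum>x\<in>states S d. q0 x * fwd_kernel S d t x y)"

definition score :: "nat \<Rightarrow> nat \<Rightarrow> ((nat \<Rightarrow> nat) \<Rightarrow> real) \<Rightarrow> real \<Rightarrow> (nat \<Rightarrow> nat) \<Rightarrow> (nat \<Rightarrow> nat) \<Rightarrow> real" where
  "score S d q0 t y x = qlaw S d q0 t y / qlaw S d q0 t x"

definition rev_rate :: "nat \<Rightarrow> nat \<Rightarrow> ((nat \<Rightarrow> nat) \<Rightarrow> real) \<Rightarrow> real \<Rightarrow> real \<Rightarrow> (nat \<Rightarrow> nat) \<Rightarrow> (nat \<Rightarrow> nat) \<Rightarrow> real" where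
  "rev_rate S d q0 T t x y = Qunif S d y x * score S d q0 (T - t) y x"

definition rev_cond :: "nat \<Rightarrow> nat \<Rightarrow> ((nat \<Rightarrow> nat) \<Rightarrow> real) \<Rightarrow> real \<Rightarrow> real \<Rightarrow> real \<Rightarrow> (nat \<Rightarrow> nat) \<Rightarrow> (nat \<Rightarrow> nat) \<Rightarrow> real" where
  "rev_cond S d q0 T l t x y =
     transition (states S d) (gen (states S d) (rev_rate S d q0 T)) {l..<T} l t x y"

end

theory Submission
  imports Defs
begin


lemma trans_unique:
  fixes X :: "'a set" and A :: "real \<Rightarrow> 'a \<Rightarrow> 'a \<Rightarrow> real"
  assumes fin: "finite X"
    and P1: "is_transition X A I l P1" and P2: "is_transition X A I l P2"
    and conv: "\<And>a b. a \<in> I \<Longrightarrow> b \<in> I \<Longrightarrow> {a..b} \<subseteq> I"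
    and lI: "l \<in> I" and Ige: "I \<subseteq> {l..}"
    and cont: "\<And>b z y. b \<in> I \<Longrightarrow> z \<in> X \<Longrightarrow> y \<in> X \<Longrightarrow> continuous_on {l..b} (\<lambda>s. A s z y)"
  shows "P1 = P2"
proof (intro ext)
  fix b x y
  show "P1 b x y = P2 b x y"
  proof (cases "b \<in> I \<and> x \<in> X \<and> y \<in> X")
    case False
    then show ?thesis using P1 P2 unfolding is_transition_def by metis
  next
    case True
    then have bI: "b \<in> I" and xX: "x \<in> X" and yX: "y \<in> X" by auto
    define D where "D s y = P1 s x y - P2 s x y" for s y
    have D0: "D l y = 0" if "y \<in> X" for y
      using P1 P2 that xX lI unfolding is_transition_def D_def by auto
    have dD: "((\<lambda>s. D s y) has_real_derivative (\<Sum>z\<in>X. D s z * A s z y)) (at s within I)"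
      if "s \<in> I" "y \<in> X" for s y
    proof -
      have "((\<lambda>s. P1 s x y - P2 s x y) has_real_derivative
          (\<Sum>z\<in>X. P1 s x z * A s z y) - (\<Sum>z\<in>X. P2 s x z * A s z y)) (at s within I)"
        using P1 P2 that xX unfolding is_transition_def by (intro derivative_intros) auto
      moreover have "(\<Sum>z\<in>X. P1 s x z * A s z y) - (\<Sum>z\<in>X. P2 s x z * A s z y)
          = (\<Sum>z\<in>X. D s z * A s z y)"
        unfolding D_def by (simp add: sum_subtractf[symmetric] left_diff_distrib)
      ultimately show ?thesis unfolding D_def by simp
    qed
    have "\<forall>y\<in>X. D b y = 0"
    proof (cases "b = l")
      case True then show ?thesis using D0 by auto
    next
      case False
      with bI Ige have lb: "l < b" by force
      have lbI: "{l..b} \<subseteq> I" using conv lI bI by auto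
      define F where "F s = (\<Sum>z\<in>X. \<Sum>y\<in>X. \<bar>A s z y\<bar>)" for s
      have "continuous_on {l..b} F"
        unfolding F_def using cont bI by (intro continuous_intros) auto
      then have "bounded (F ` {l..b})"
        by (intro compact_imp_bounded compact_continuous_image) auto
      then obtain K0 where K0: "\<And>s. s \<in> {l..b} \<Longrightarrow> \<bar>F s\<bar> \<le> K0"
        unfolding bounded_iff by (metis imageI real_norm_def)
      define K where "K = max K0 0"
      have K: "\<bar>A s z y\<bar> \<le> K" if "s \<in> {l..b}" "z \<in> X" "y \<in> X" for s z y
      proof -
        have "\<bar>A s z y\<bar> \<le> (\<Sum>y\<in>X. \<bar>A s z y\<bar>)"
          using fin that by (intro member_le_sum) auto
        also have "\<dots> \<le> F s" unfolding F_def
          using fin that by (intro member_le_sum[where f="\<lambda>z. \<Sum>y\<in>X. \<bar>A s z y\<bar>"]) (auto intro: sum_nonneg)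
        also have "\<dots> \<le> K" using K0[OF that(1)] unfolding K_def by linarith
        finally show ?thesis .
      qed
      have K_nn: "K \<ge> 0" unfolding K_def by simp
      define N where "N = real (card X)"
      define C where "C = 2 * K * N"
      define u where "u s = (\<Sum>y\<in>X. D s y * D s y)" for s
      define du where "du s = (\<Sum>y\<in>X. 2 * D s y * (\<Sum>z\<in>X. D s z * A s z y))" for s
      have du: "(u has_real_derivative du s) (at s within I)" if "s \<in> I" for s
        unfolding u_def du_def
        by (rule DERIV_sum, rule derivative_eq_intros, rule dD[OF that], assumption,
            rule dD[OF that], assumption) (simp add: algebra_simps)
      have du_le: "du s \<le> C * u s" if "s \<in> {l..b}" for s
      proof -
        have "du s \<le> (\<Sum>y\<in>X. 2 * \<bar>D s y\<bar> * (\<Sum>z\<in>X. \<bar>D s z\<bar> * K))"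
          unfolding du_def
        proof (rule sum_mono)
          fix y assume yX: "y \<in> X"
          have "\<bar>\<Sum>z\<in>X. D s z * A s z y\<bar> \<le> (\<Sum>z\<in>X. \<bar>D s z\<bar> * K)"
            by (rule order_trans[OF sum_abs], rule sum_mono)
               (use K[OF that _ yX] in \<open>auto simp: abs_mult intro: mult_left_mono\<close>)
          then have "2 * D s y * (\<Sum>z\<in>X. D s z * A s z y) \<le> 2 * \<bar>D s y\<bar> * \<bar>\<Sum>z\<in>X. D s z * A s z y\<bar>"
            by (simp add: abs_mult[symmetric] mult.assoc)
          also have "\<dots> \<le> 2 * \<bar>D s y\<bar> * (\<Sum>z\<in>X. \<bar>D s z\<bar> * K)"
            using \<open>\<bar>\<Sum>z\<in>X. D s z * A s z y\<bar> \<le> _\<close> by (intro mult_left_mono) auto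
          finally show "2 * D s y * (\<Sum>z\<in>X. D s z * A s z y) \<le> 2 * \<bar>D s y\<bar> * (\<Sum>z\<in>X. \<bar>D s z\<bar> * K)" .
        qed
        also have "\<dots> = 2 * K * (\<Sum>y\<in>X. \<Sum>z\<in>X. \<bar>D s y\<bar> * \<bar>D s z\<bar>)"
          by (simp add: sum_distrib_left sum_distrib_right mult_ac)
        also have "\<dots> \<le> 2 * K * (\<Sum>y\<in>X. \<Sum>z\<in>X. (D s y * D s y + D s z * D s z) / 2)"
        proof (intro mult_left_mono sum_mono)
          fix y z
          have "0 \<le> (\<bar>D s y\<bar> - \<bar>D s z\<bar>)^2" by simp
          then show "\<bar>D s y\<bar> * \<bar>D s z\<bar> \<le> (D s y * D s y + D s z * D s z) / 2"
            by (simp add: power2_eq_square algebra_simps abs_mult_self_eq)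
        qed (use K_nn in auto)
        also have "(\<Sum>y\<in>X. \<Sum>z\<in>X. (D s y * D s y + D s z * D s z) / 2) = N * u s"
          unfolding u_def N_def
          by (simp add: sum.distrib add_divide_distrib sum_divide_distrib[symmetric]
              sum.swap[of _ X X] sum_distrib_left[symmetric])
        finally show ?thesis unfolding C_def by (simp add: mult_ac)
      qed
      define w where "w s = u s * exp (- C * s)" for s
      have dw: "(w has_real_derivative (du s - C * u s) * exp (- C * s)) (at s within I)"
        if "s \<in> I" for s
        unfolding w_def using du[OF that]
        by (auto intro!: derivative_eq_intros simp: algebra_simps)
      have "continuous_on {l..b} w"
        unfolding continuous_on_eq_continuous_within
      proof
        fix s assume "s \<in> {l..b}"
        then have "continuous (at s within I) w"
          using dw lbI by (meson DERIV_continuous subsetD)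
        then show "continuous (at s within {l..b}) w"
          using continuous_within_subset lbI by blast
      qed
      moreover have "w differentiable (at s)" if "l < s" "s < b" for s
      proof -
        have "at s within I = at s"
          by (rule at_within_open_subset[where S="{l<..<b}"]) (use that lbI in auto)
        then show ?thesis using dw[of s] that lbI
          by (metis atLeastAtMost_iff less_eq_real_def real_differentiable_def subsetD)
      qed
      ultimately obtain L z where z: "l < z" "z < b" "DERIV w z :> L" "w b - w l = (b - l) * L"
        using MVT[OF lb] by blast
      have "at z within I = at z"
        by (rule at_within_open_subset[where S="{l<..<b}"]) (use z lbI in auto)
      moreover have "z \<in> I" using z lbI by auto
      ultimately have "DERIV w z :> (du z - C * u z) * exp (- C * z)"
        using dw[of z] by metis
      then have "L = (du z - C * u z) * exp (- C * z)" using z(3) DERIV_unique by blast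
      moreover have "du z - C * u z \<le> 0" using du_le[of z] z by auto
      ultimately have "L \<le> 0" by (simp add: mult_nonpos_nonneg)
      moreover have "w l = 0" unfolding w_def u_def using D0 by simp
      ultimately have "w b \<le> 0" using z lb by (simp add: mult_nonneg_nonpos)
      then have "u b \<le> 0" unfolding w_def by (simp add: mult_le_0_iff)
      moreover have "u b \<ge> 0" unfolding u_def by (intro sum_nonneg) auto
      ultimately have "(\<Sum>y\<in>X. D b y * D b y) = 0" unfolding u_def by linarith
      then show ?thesis using fin by (subst (asm) sum_nonneg_eq_0_iff) auto
    qed
    then show ?thesis using yX unfolding D_def by auto
  qed
qed



definition kk :: "nat \<Rightarrow> real \<Rightarrow> nat \<Rightarrow> nat \<Rightarrow> real" where
  "kk S t a b = (1 - exp (- t)) / real S + (if a = b then exp (- t) else 0)"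

definition pr :: "nat \<Rightarrow> nat \<Rightarrow> real \<Rightarrow> (nat \<Rightarrow> nat) \<Rightarrow> (nat \<Rightarrow> nat) \<Rightarrow> real" where
  "pr S d t x y = (\<Prod>j\<in>{1..d}. kk S t (x j) (y j))"

lemma states_fin: "finite (states S d)"
  unfolding states_def by (auto intro: finite_PiE)

lemma kk_sum: assumes "a \<in> {1..S}" shows "(\<Sum>b\<in>{1..S}. kk S t a b) = 1"
proof -
  have S: "S \<ge> 1" using assms by auto
  have "(\<Sum>b\<in>{1..S}. kk S t a b) = (\<Sum>b\<in>{1..S}. (1 - exp (- t)) / real S)
      + (\<Sum>b\<in>{1..S}. if a = b then exp (- t) else 0)"
    unfolding kk_def by (simp add: sum.distrib)
  also have "\<dots> = (1 - exp (- t)) + exp (- t)"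
    using assms S by (simp add: sum.delta)
  finally show ?thesis by simp
qed

lemma kk_ck: assumes "a \<in> {1..S}" "c \<in> {1..S}"
  shows "(\<Sum>b\<in>{1..S}. kk S u a b * kk S v b c) = kk S (u + v) a c"
proof -
  have S: "S \<ge> 1" using assms by auto
  define eu where "eu = exp (- u)"
  define ev where "ev = exp (- v)"
  have e: "exp (- (u + v)) = eu * ev" unfolding eu_def ev_def by (simp add: exp_add[symmetric])
  have "(\<Sum>b\<in>{1..S}. kk S u a b * kk S v b c) =
     (\<Sum>b\<in>{1..S}. (1 - eu) / S * ((1 - ev) / S)) + (\<Sum>b\<in>{1..S}. if b = c then (1 - eu) / S * ev else 0)
     + (\<Sum>b\<in>{1..S}. if a = b then eu * ((1 - ev) / S) else 0)
     + (\<Sum>b\<in>{1..S}. if a = b then (if b = c then eu * ev else 0) else 0)"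
    unfolding sum.distrib[symmetric]
    by (rule sum.cong) (auto simp: kk_def eu_def[symmetric] ev_def[symmetric] algebra_simps)
  also have "\<dots> = S * ((1 - eu) / S * ((1 - ev) / S)) + (1 - eu) / S * ev + eu * ((1 - ev) / S)
      + (if a = c then eu * ev else 0)"
    using assms by (simp add: sum.delta sum.delta')
  also have "\<dots> = kk S (u + v) a c"
    unfolding kk_def e using S by (simp add: field_simps)
  finally show ?thesis .
qed

lemma pr_ck: assumes "x \<in> states S d" "y \<in> states S d"
  shows "(\<Sum>z\<in>states S d. pr S d u x z * pr S d v z y) = pr S d (u + v) x y"
proof -
  have "(\<Sum>z\<in>states S d. pr S d u x z * pr S d v z y)
      = (\<Sum>z\<in>PiE {1..d} (\<lambda>_. {1..S}). \<Prod>j\<in>{1..d}. kk S u (x j) (z j) * kk S v (z j) (y j))"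
    unfolding states_def pr_def by (simp add: prod.distrib)
  also have "\<dots> = (\<Prod>j\<in>{1..d}. \<Sum>b\<in>{1..S}. kk S u (x j) b * kk S v b (y j))"
    by (rule prod_sum_PiE[symmetric]) auto
  also have "\<dots> = (\<Prod>j\<in>{1..d}. kk S (u + v) (x j) (y j))"
    using assms unfolding states_def by (intro prod.cong refl kk_ck) (auto simp: PiE_iff)
  finally show ?thesis unfolding pr_def .
qed

lemma pr_sym: "pr S d t x y = pr S d t y x"
  unfolding pr_def kk_def by (intro prod.cong) auto

lemma pr0: assumes "x \<in> states S d" "y \<in> states S d"
  shows "pr S d 0 x y = (if x = y then 1 else 0)"
proof (cases "x = y")
  case True then show ?thesis unfolding pr_def kk_def by simp
next
  case False
  then obtain j where j: "x j \<noteq> y j" by auto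
  with assms have "j \<in> {1..d}" unfolding states_def by (metis PiE_arb)
  then have "pr S d 0 x y = 0" using j unfolding pr_def kk_def
    by (intro prod_zero) (auto intro!: bexI[of _ j])
  then show ?thesis using False by simp
qed

lemma pr_pos: assumes "t > 0" "S \<ge> 1" shows "pr S d t x y > 0"
proof -
  have "exp (- t) < 1" using assms by simp
  then have "kk S t a b > 0" for a b unfolding kk_def using assms by (auto intro!: add_pos_nonneg)
  then show ?thesis unfolding pr_def by (intro prod_pos) auto
qed

lemma diff_nonempty:
  assumes "z \<in> states S d" "y \<in> states S d" "z \<noteq> y"
  shows "{i\<in>{1..d}. z i \<noteq> y i} \<noteq> {}"
proof
  assume "{i\<in>{1..d}. z i \<noteq> y i} = {}"
  then have "z i = y i" for i using assms unfolding states_def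
    by (cases "i \<in> {1..d}") (auto simp: PiE_iff extensional_def)
  then show False using assms by auto
qed

lemma Q_dec:
  assumes "z \<in> states S d" "y \<in> states S d" "z \<noteq> y"
  shows "Qunif S d z y = (\<Sum>i\<in>{1..d}. if (\<forall>j\<in>{1..d}. j \<noteq> i \<longrightarrow> z j = y j) then 1 / real S else 0)"
proof -
  define D where "D = {i\<in>{1..d}. z i \<noteq> y i}"
  have Dne: "D \<noteq> {}" using diff_nonempty[OF assms] unfolding D_def .
  have fD: "finite D" unfolding D_def by auto
  have eq: "{i\<in>{1..d}. \<forall>j\<in>{1..d}. j \<noteq> i \<longrightarrow> z j = y j} = (if card D = 1 then D else {})"
  proof (cases "card D = 1")
    case True
    then obtain i0 where D: "D = {i0}" by (meson card_1_singletonE)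
    then have "i0 \<in> {1..d}" "z i0 \<noteq> y i0" unfolding D_def by auto
    moreover have "z j = y j" if "j \<in> {1..d}" "j \<noteq> i0" for j
      using D that unfolding D_def by auto
    ultimately show ?thesis using True D by auto
  next
    case False
    have "\<not> (\<forall>j\<in>{1..d}. j \<noteq> i \<longrightarrow> z j = y j)" if "i \<in> {1..d}" for i
    proof
      assume H: "\<forall>j\<in>{1..d}. j \<noteq> i \<longrightarrow> z j = y j"
      then have "D \<subseteq> {i}" unfolding D_def by auto
      with Dne have "D = {i}" by auto
      with False show False by simp
    qed
    then show ?thesis using False by auto
  qed
  have "(\<Sum>i\<in>{1..d}. if (\<forall>j\<in>{1..d}. j \<noteq> i \<longrightarrow> z j = y j) then 1 / real S else 0)
      = card {i\<in>{1..d}. \<forall>j\<in>{1..d}. j \<noteq> i \<longrightarrow> z j = y j} / real S"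
    by (simp add: sum.If_cases Int_def)
  also have "\<dots> = (if card D = 1 then 1 / real S else 0)"
    by (subst eq) auto
  finally show ?thesis unfolding Qunif_def hamming_def D_def[symmetric] by simp
qed

lemma agree_set:
  assumes "y \<in> states S d" "i \<in> {1..d}"
  shows "{z\<in>states S d. \<forall>j\<in>{1..d}. j \<noteq> i \<longrightarrow> z j = y j} = (\<lambda>a. y(i := a)) ` {1..S}"
    and "inj_on (\<lambda>a. y(i := a)) {1..S}"
proof -
  show "inj_on (\<lambda>a. y(i := a)) {1..S}" by (auto simp: inj_on_def dest: fun_cong[where x=i])
  show "{z\<in>states S d. \<forall>j\<in>{1..d}. j \<noteq> i \<longrightarrow> z j = y j} = (\<lambda>a. y(i := a)) ` {1..S}"
  proof safe
    fix z assume z: "z \<in> states S d" "\<forall>j\<in>{1..d}. j \<noteq> i \<longrightarrow> z j = y j"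
    have "z = y(i := z i)"
    proof
      fix j show "z j = (y(i := z i)) j"
        using z assms unfolding states_def by (cases "j \<in> {1..d}") (auto simp: PiE_iff extensional_def)
    qed
    moreover have "z i \<in> {1..S}" using z assms unfolding states_def by (auto simp: PiE_iff)
    ultimately show "z \<in> (\<lambda>a. y(i := a)) ` {1..S}" by blast
  next
    fix a assume "a \<in> {1..S}"
    then show "y(i := a) \<in> states S d" using assms unfolding states_def by (auto simp: PiE_iff extensional_def)
  qed auto
qed



lemma Qunif_sym: "Qunif S d x y = Qunif S d y x"
proof -
  have "{i \<in> {1..d}. x i \<noteq> y i} = {i \<in> {1..d}. y i \<noteq> x i}" by auto
  then show ?thesis unfolding Qunif_def hamming_def by simp
qed

lemma agree_sum:
  fixes f :: "(nat \<Rightarrow> nat) \<Rightarrow> real"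
  assumes y: "y \<in> states S d" and i: "i \<in> {1..d}"
  shows "(\<Sum>w\<in>states S d - {y}. if (\<forall>j\<in>{1..d}. j \<noteq> i \<longrightarrow> w j = y j) then f w else 0)
       = (\<Sum>a\<in>{1..S}. f (y(i := a))) - f y"
proof -
  define Ag where "Ag = {w\<in>states S d. \<forall>j\<in>{1..d}. j \<noteq> i \<longrightarrow> w j = y j}"
  have fin: "finite Ag" unfolding Ag_def using states_fin by auto
  have yA: "y \<in> Ag" unfolding Ag_def using y by auto
  have "(\<Sum>w\<in>states S d - {y}. if (\<forall>j\<in>{1..d}. j \<noteq> i \<longrightarrow> w j = y j) then f w else 0)
      = (\<Sum>w\<in>Ag - {y}. f w)"
    using states_fin by (simp add: sum.If_cases Ag_def) (intro sum.cong; auto)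
  also have "\<dots> = (\<Sum>w\<in>Ag. f w) - f y" by (subst sum_diff1[OF fin]) (simp add: yA)
  also have "(\<Sum>w\<in>Ag. f w) = (\<Sum>a\<in>{1..S}. f (y(i := a)))"
    unfolding Ag_def agree_set[OF y i] by (rule sum.reindex_cong[OF agree_set(2)[OF y i] refl refl])
  finally show ?thesis .
qed

lemma Qsum_row:
  assumes y: "y \<in> states S d" and S: "S \<ge> 1"
  shows "(\<Sum>w\<in>states S d - {y}. Qunif S d y w) = real d * (real S - 1) / real S"
proof -
  have "(\<Sum>w\<in>states S d - {y}. Qunif S d y w)
      = (\<Sum>w\<in>states S d - {y}. \<Sum>i\<in>{1..d}. if (\<forall>j\<in>{1..d}. j \<noteq> i \<longrightarrow> w j = y j) then 1 / real S else 0)"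
    using y by (intro sum.cong refl) (auto simp: Qunif_sym[of S d y] Q_dec)
  also have "\<dots> = (\<Sum>i\<in>{1..d}. \<Sum>w\<in>states S d - {y}. if (\<forall>j\<in>{1..d}. j \<noteq> i \<longrightarrow> w j = y j) then 1 / real S else 0)"
    by (rule sum.swap)
  also have "\<dots> = (\<Sum>i\<in>{1..d}. (real S - 1) / real S)"
  proof (rule sum.cong[OF refl])
    fix i assume i: "i \<in> {1..d}"
    show "(\<Sum>w\<in>states S d - {y}. if (\<forall>j\<in>{1..d}. j \<noteq> i \<longrightarrow> w j = y j) then 1 / real S else 0)
        = (real S - 1) / real S"
      using agree_sum[OF y i, of "\<lambda>_. 1 / real S"] S by (simp add: diff_divide_distrib)
  qed
  finally show ?thesis by simp
qed

definition Rp :: "nat \<Rightarrow> nat \<Rightarrow> real \<Rightarrow> (nat \<Rightarrow> nat) \<Rightarrow> (nat \<Rightarrow> nat) \<Rightarrow> nat \<Rightarrow> real" where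
  "Rp S d t x y i = (\<Prod>j\<in>{1..d} - {i}. kk S t (x j) (y j))"

definition dpr :: "nat \<Rightarrow> nat \<Rightarrow> real \<Rightarrow> (nat \<Rightarrow> nat) \<Rightarrow> (nat \<Rightarrow> nat) \<Rightarrow> real" where
  "dpr S d t x y = (\<Sum>i\<in>{1..d}. (1 / real S - kk S t (x i) (y i)) * Rp S d t x y i)"

lemma pr_split: "i \<in> {1..d} \<Longrightarrow> pr S d t x y = kk S t (x i) (y i) * Rp S d t x y i"
  unfolding pr_def Rp_def by (rule prod.remove) auto

lemma pr_deriv: "((\<lambda>t. pr S d t x y) has_real_derivative dpr S d t x y) (at t)"
proof -
  have "((\<lambda>t. kk S t a b) has_real_derivative (1 / real S - kk S t a b)) (at t)" for a b
    unfolding kk_def by (cases "S = 0") (auto intro!: derivative_eq_intros simp: field_simps)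
  then show ?thesis unfolding pr_def dpr_def Rp_def
    by (intro has_field_derivative_prod) auto
qed

lemma fwd_eq:
  assumes x: "x \<in> states S d" and y: "y \<in> states S d" and S: "S \<ge> 1"
  shows "(\<Sum>z\<in>states S d. pr S d t x z * gen (states S d) (\<lambda>_. Qunif S d) t z y) = dpr S d t x y"
proof -
  let ?X = "states S d"
  let ?R = "Rp S d t x y"
  have "(\<Sum>z\<in>?X. pr S d t x z * gen ?X (\<lambda>_. Qunif S d) t z y)
     = pr S d t x y * gen ?X (\<lambda>_. Qunif S d) t y y + (\<Sum>z\<in>?X - {y}. pr S d t x z * gen ?X (\<lambda>_. Qunif S d) t z y)"
    using y states_fin by (simp add: sum.remove)
  also have "gen ?X (\<lambda>_. Qunif S d) t y y = - (real d * (real S - 1) / real S)"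
    unfolding gen_def using Qsum_row[OF y S] by simp
  also have "(\<Sum>z\<in>?X - {y}. pr S d t x z * gen ?X (\<lambda>_. Qunif S d) t z y)
      = (\<Sum>z\<in>?X - {y}. \<Sum>i\<in>{1..d}. if (\<forall>j\<in>{1..d}. j \<noteq> i \<longrightarrow> z j = y j) then pr S d t x z / real S else 0)"
    using y by (intro sum.cong refl) (auto simp: gen_def Q_dec sum_distrib_left if_distrib intro!: sum.cong)
  also have "\<dots> = (\<Sum>i\<in>{1..d}. \<Sum>z\<in>?X - {y}. if (\<forall>j\<in>{1..d}. j \<noteq> i \<longrightarrow> z j = y j) then pr S d t x z / real S else 0)"
    by (rule sum.swap)
  also have "\<dots> = (\<Sum>i\<in>{1..d}. ?R i / real S - kk S t (x i) (y i) * ?R i / real S)"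
  proof (rule sum.cong[OF refl])
    fix i assume i: "i \<in> {1..d}"
    have "(\<Sum>a\<in>{1..S}. pr S d t x (y(i := a)) / real S) = (\<Sum>a\<in>{1..S}. kk S t (x i) a) * ?R i / real S"
    proof -
      have "pr S d t x (y(i := a)) = kk S t (x i) a * ?R i" for a
      proof -
        have "Rp S d t x (y(i := a)) i = ?R i" unfolding Rp_def by (intro prod.cong) auto
        then show ?thesis using pr_split[OF i, of S t x "y(i := a)"] by simp
      qed
      then show ?thesis by (simp add: sum_divide_distrib[symmetric] sum_distrib_right)
    qed
    also have "\<dots> = ?R i / real S"
    proof -
      have "x i \<in> {1..S}" using x i unfolding states_def by (auto simp: PiE_iff)
      then show ?thesis using kk_sum[of "x i" S t] by simp
    qed
    finally show "(\<Sum>z\<in>?X - {y}. if (\<forall>j\<in>{1..d}. j \<noteq> i \<longrightarrow> z j = y j) then pr S d t x z / real S else 0)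
        = ?R i / real S - kk S t (x i) (y i) * ?R i / real S"
      using agree_sum[OF y i, of "\<lambda>z. pr S d t x z / real S"] pr_split[OF i, of S t x y] by simp
  qed
  also have "pr S d t x y * - (real d * (real S - 1) / real S)
      = (\<Sum>i\<in>{1..d}. - (kk S t (x i) (y i) * ?R i * (real S - 1) / real S))"
  proof -
    have "(\<Sum>i\<in>{1..d}. - (kk S t (x i) (y i) * ?R i * (real S - 1) / real S))
        = (\<Sum>i\<in>{1..d}. - (pr S d t x y * (real S - 1) / real S))"
      by (intro sum.cong refl) (simp add: pr_split)
    then show ?thesis by simp
  qed
  finally have "(\<Sum>z\<in>?X. pr S d t x z * gen ?X (\<lambda>_. Qunif S d) t z y)
      = (\<Sum>i\<in>{1..d}. - (kk S t (x i) (y i) * ?R i * (real S - 1) / real S) +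
           (?R i / real S - kk S t (x i) (y i) * ?R i / real S))"
    by (simp only: sum.distrib)
  also have "\<dots> = dpr S d t x y"
    unfolding dpr_def using S by (intro sum.cong refl) (simp add: field_simps)
  finally show ?thesis .
qed



definition pk :: "nat \<Rightarrow> nat \<Rightarrow> real \<Rightarrow> (nat \<Rightarrow> nat) \<Rightarrow> (nat \<Rightarrow> nat) \<Rightarrow> real" where
  "pk S d t x y = (if 0 \<le> t \<and> x \<in> states S d \<and> y \<in> states S d then pr S d t x y else 0)"

lemma pk_trans:
  assumes S: "S \<ge> 1"
  shows "is_transition (states S d) (gen (states S d) (\<lambda>_. Qunif S d)) {0..} 0 (pk S d)"
  unfolding is_transition_def
proof (intro conjI ballI allI impI)
  fix x y assume "x \<in> states S d" "y \<in> states S d"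
  then show "pk S d 0 x y = (if x = y then 1 else 0)" unfolding pk_def by (simp add: pr0)
next
  fix t x y assume t: "t \<in> {0::real..}" and x: "x \<in> states S d" and y: "y \<in> states S d"
  have "(\<Sum>z\<in>states S d. pk S d t x z * gen (states S d) (\<lambda>_. Qunif S d) t z y)
      = (\<Sum>z\<in>states S d. pr S d t x z * gen (states S d) (\<lambda>_. Qunif S d) t z y)"
    using t x by (intro sum.cong refl) (auto simp: pk_def)
  also have "\<dots> = dpr S d t x y" using fwd_eq[OF x y S] .
  finally have eq: "(\<Sum>z\<in>states S d. pk S d t x z * gen (states S d) (\<lambda>_. Qunif S d) t z y) = dpr S d t x y" .
  have "((\<lambda>s. pr S d s x y) has_real_derivative dpr S d t x y) (at t within {0..})"
    using pr_deriv by (rule has_field_derivative_at_within)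
  then have "((\<lambda>s. pk S d s x y) has_real_derivative dpr S d t x y) (at t within {0..})"
    by (rule has_field_derivative_transform_within[where d=1]) (use t x y in \<open>auto simp: pk_def\<close>)
  then show "((\<lambda>s. pk S d s x y) has_real_derivative
      (\<Sum>z\<in>states S d. pk S d t x z * gen (states S d) (\<lambda>_. Qunif S d) t z y)) (at t within {0..})"
    using eq by simp
next
  fix t x y assume "t \<notin> {0::real..} \<or> x \<notin> states S d \<or> y \<notin> states S d"
  then show "pk S d t x y = 0" unfolding pk_def by auto
qed

lemma fwd_kernel_eq: assumes S: "S \<ge> 1" shows "fwd_kernel S d = pk S d"
  unfolding fwd_kernel_def transition_def
proof (rule the1_equality)
  show "is_transition (states S d) (gen (states S d) (\<lambda>_. Qunif S d)) {0..} 0 (pk S d)"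
    using pk_trans[OF S, where d=d] .
next
  show "\<exists>!P. is_transition (states S d) (gen (states S d) (\<lambda>_. Qunif S d)) {0..} 0 P"
  proof (rule ex1I)
    show "is_transition (states S d) (gen (states S d) (\<lambda>_. Qunif S d)) {0..} 0 (pk S d)"
      using pk_trans[OF S, where d=d] .
  next
    fix P assume "is_transition (states S d) (gen (states S d) (\<lambda>_. Qunif S d)) {0..} 0 P"
    then show "P = pk S d"
      by (rule trans_unique[OF states_fin _ pk_trans[OF S, where d=d]]) (auto simp: gen_def)
  qed
qed

definition qq :: "nat \<Rightarrow> nat \<Rightarrow> ((nat \<Rightarrow> nat) \<Rightarrow> real) \<Rightarrow> real \<Rightarrow> (nat \<Rightarrow> nat) \<Rightarrow> real" where
  "qq S d q0 t y = (\<Sum>x\<in>states S d. q0 x * pr S d t x y)"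

lemma qlaw_eq: "S \<ge> 1 \<Longrightarrow> t \<ge> 0 \<Longrightarrow> y \<in> states S d \<Longrightarrow> qlaw S d q0 t y = qq S d q0 t y"
  unfolding qlaw_def qq_def fwd_kernel_eq by (intro sum.cong refl) (auto simp: pk_def)

lemma qq_pos:
  assumes "S \<ge> 1" "t > 0" and q0_nonneg: "\<forall>x\<in>states S d. q0 x \<ge> 0"
    and q0_sum: "(\<Sum>x\<in>states S d. q0 x) = 1"
  shows "qq S d q0 t y > 0"
proof -
  obtain x0 where x0: "x0 \<in> states S d" "q0 x0 > 0"
  proof (rule ccontr)
    assume "\<not> thesis"
    then have "\<forall>x\<in>states S d. q0 x = 0" using that q0_nonneg by force
    then show False using q0_sum by simp
  qed
  show ?thesis unfolding qq_def
    using x0 states_fin pr_pos[OF assms(2,1)] less_imp_le[OF pr_pos[OF assms(2,1)]] q0_nonneg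
    by (intro sum_pos2[of _ x0]) (auto intro!: mult_pos_pos mult_nonneg_nonneg)
qed

lemma qq_ck: assumes "y \<in> states S d"
  shows "(\<Sum>z\<in>states S d. qq S d q0 u z * pr S d v z y) = qq S d q0 (u + v) y"
proof -
  have "(\<Sum>z\<in>states S d. qq S d q0 u z * pr S d v z y)
      = (\<Sum>x\<in>states S d. q0 x * (\<Sum>z\<in>states S d. pr S d u x z * pr S d v z y))"
    unfolding qq_def sum_distrib_right sum_distrib_left
    by (subst sum.swap) (simp add: mult_ac)
  also have "\<dots> = qq S d q0 (u + v) y"
    unfolding qq_def using assms by (intro sum.cong refl) (simp add: pr_ck)
  finally show ?thesis .
qed

lemma qq_deriv:
  assumes S: "S \<ge> 1" and y: "y \<in> states S d"
  shows "((\<lambda>t. qq S d q0 t y) has_real_derivative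
    (\<Sum>z\<in>states S d. qq S d q0 t z * gen (states S d) (\<lambda>_. Qunif S d) t z y)) (at t)"
proof -
  have "((\<lambda>t. qq S d q0 t y) has_real_derivative (\<Sum>x\<in>states S d. q0 x * dpr S d t x y)) (at t)"
    unfolding qq_def by (intro DERIV_sum DERIV_cmult pr_deriv)
  also have "(\<Sum>x\<in>states S d. q0 x * dpr S d t x y)
      = (\<Sum>x\<in>states S d. q0 x * (\<Sum>z\<in>states S d. pr S d t x z * gen (states S d) (\<lambda>_. Qunif S d) t z y))"
    using fwd_eq[OF _ y S] by (intro sum.cong refl) simp
  also have "\<dots> = (\<Sum>z\<in>states S d. qq S d q0 t z * gen (states S d) (\<lambda>_. Qunif S d) t z y)"
    unfolding qq_def sum_distrib_right sum_distrib_left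
    by (subst sum.swap) (simp add: mult_ac)
  finally show ?thesis .
qed



definition Rv :: "nat \<Rightarrow> nat \<Rightarrow> ((nat \<Rightarrow> nat) \<Rightarrow> real) \<Rightarrow> real \<Rightarrow> real \<Rightarrow> real \<Rightarrow> (nat \<Rightarrow> nat) \<Rightarrow> (nat \<Rightarrow> nat) \<Rightarrow> real" where
  "Rv S d q0 T l s x y = (if s \<in> {l..<T} \<and> x \<in> states S d \<and> y \<in> states S d
     then qq S d q0 (T - s) y * pr S d (s - l) x y / qq S d q0 (T - l) x else 0)"

lemma qq_deriv_rev:
  assumes S: "S \<ge> 1" and y: "y \<in> states S d"
  shows "((\<lambda>s. qq S d q0 (T - s) y) has_real_derivative
    - (\<Sum>z\<in>states S d. qq S d q0 (T - s) z * gen (states S d) (\<lambda>_. Qunif S d) (T - s) z y)) (at s)"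
proof -
  have "((\<lambda>s. T - s) has_real_derivative -1) (at s)" by (auto intro!: derivative_eq_intros)
  from DERIV_chain2[OF qq_deriv[OF S y] this] show ?thesis by simp
qed

lemma qq_cont:
  assumes S: "S \<ge> 1" and y: "y \<in> states S d"
  shows "continuous_on A (\<lambda>s. qq S d q0 (T - s) y)"
  by (rule continuous_at_imp_continuous_on) (use qq_deriv_rev[OF S y] DERIV_isCont in blast)

context
  fixes S d :: nat and q0 :: "(nat \<Rightarrow> nat) \<Rightarrow> real" and T l :: real
  assumes S: "S \<ge> 1" and q0_nonneg: "\<forall>x\<in>states S d. q0 x \<ge> 0"
    and q0_sum: "(\<Sum>x\<in>states S d. q0 x) = 1" and lT: "l < T"
begin

lemma qpos: "s < T \<Longrightarrow> qq S d q0 (T - s) w > 0"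
  using qq_pos[OF S _ q0_nonneg q0_sum] by simp

lemma rev_rate_eq:
  assumes "s < T" "z \<in> states S d" "y \<in> states S d"
  shows "rev_rate S d q0 T s z y = Qunif S d y z * qq S d q0 (T - s) y / qq S d q0 (T - s) z"
  unfolding rev_rate_def score_def using assms qlaw_eq[OF S] by simp

lemma Rv_trans: "is_transition (states S d) (gen (states S d) (rev_rate S d q0 T)) {l..<T} l (Rv S d q0 T l)"
  unfolding is_transition_def
proof (intro conjI ballI allI impI)
  fix x y assume x: "x \<in> states S d" and y: "y \<in> states S d"
  show "Rv S d q0 T l l x y = (if x = y then 1 else 0)"
    unfolding Rv_def using x y lT qpos[of l x] by (cases "x = y") (auto simp: pr0)
next
  fix t x y assume "t \<notin> {l..<T} \<or> x \<notin> states S d \<or> y \<notin> states S d"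
  then show "Rv S d q0 T l t x y = 0" unfolding Rv_def by auto
next
  fix s x y assume s: "s \<in> {l..<T}" and x: "x \<in> states S d" and y: "y \<in> states S d"
  let ?X = "states S d"
  define q where "q w = qq S d q0 (T - s) w" for w
  define p where "p z = pr S d (s - l) x z" for z
  define c where "c = qq S d q0 (T - l) x"
  define G where "G z y = gen ?X (\<lambda>_. Qunif S d) (T - s) z y" for z y
  define Gs where "Gs z y = gen ?X (\<lambda>_. Qunif S d) (s - l) z y" for z y
  have qp: "q w > 0" for w unfolding q_def using qpos s by auto
  have cp: "c > 0" unfolding c_def using qpos lT by auto
  have d2: "((\<lambda>s. pr S d (s - l) x y) has_real_derivative dpr S d (s - l) x y) (at s)"
  proof -
    have "((\<lambda>s. s - l) has_real_derivative 1) (at s)" by (auto intro!: derivative_eq_intros)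
    from DERIV_chain2[OF pr_deriv this] show ?thesis by simp
  qed
  have dd: "((\<lambda>s. qq S d q0 (T - s) y * pr S d (s - l) x y / c) has_real_derivative
      (- (\<Sum>z\<in>?X. q z * G z y) * p y + q y * dpr S d (s - l) x y) / c) (at s)"
    using DERIV_cdivide[OF DERIV_mult[OF qq_deriv_rev[OF S y] d2], where c=c]
    unfolding q_def p_def G_def by (simp add: algebra_simps)
  define DD where "DD = (\<Sum>v\<in>?X - {y}. Qunif S d y v)"
  define A1 where "A1 = (\<Sum>w\<in>?X - {y}. q w * Qunif S d w y)"
  define B1 where "B1 = (\<Sum>z\<in>?X - {y}. p z * Qunif S d z y)"
  have i1: "(\<Sum>z\<in>?X. q z * G z y) = q y * (- DD) + A1"
  proof -
    have "(\<Sum>w\<in>?X - {y}. q w * G w y) = A1" unfolding A1_def G_def by (intro sum.cong) (auto simp: gen_def)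
    then show ?thesis using y states_fin unfolding DD_def by (simp add: sum.remove) (simp add: G_def gen_def)
  qed
  have i2: "dpr S d (s - l) x y = p y * (- DD) + B1"
  proof -
    have "dpr S d (s - l) x y = (\<Sum>z\<in>?X. p z * Gs z y)"
      unfolding p_def Gs_def using fwd_eq[OF x y S] by simp
    also have "\<dots> = p y * (- DD) + B1"
    proof -
      have "(\<Sum>w\<in>?X - {y}. p w * Gs w y) = B1" unfolding B1_def Gs_def by (intro sum.cong) (auto simp: gen_def)
      then show ?thesis using y states_fin unfolding DD_def by (simp add: sum.remove) (simp add: Gs_def gen_def)
    qed
    finally show ?thesis .
  qed
  have i3: "(\<Sum>z\<in>?X. Rv S d q0 T l s x z * gen ?X (rev_rate S d q0 T) s z y)
      = - (p y * A1) / c + q y * B1 / c"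
  proof -
    have "(\<Sum>z\<in>?X. Rv S d q0 T l s x z * gen ?X (rev_rate S d q0 T) s z y)
        = (\<Sum>z\<in>?X. q z * p z / c * gen ?X (rev_rate S d q0 T) s z y)"
      using s x by (intro sum.cong refl) (simp add: Rv_def q_def p_def c_def)
    also have "\<dots> = q y * p y / c * gen ?X (rev_rate S d q0 T) s y y
        + (\<Sum>z\<in>?X - {y}. q z * p z / c * gen ?X (rev_rate S d q0 T) s z y)"
      using y states_fin by (simp add: sum.remove)
    also have "gen ?X (rev_rate S d q0 T) s y y = - (A1 / q y)"
    proof -
      have "gen ?X (rev_rate S d q0 T) s y y = - (\<Sum>w\<in>?X - {y}. q w * Qunif S d w y / q y)"
        unfolding gen_def using s y
        by (simp, intro sum.cong) (auto simp: rev_rate_eq q_def mult_ac)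
      then show ?thesis unfolding A1_def by (simp add: sum_divide_distrib)
    qed
    also have "(\<Sum>z\<in>?X - {y}. q z * p z / c * gen ?X (rev_rate S d q0 T) s z y)
        = (\<Sum>z\<in>?X - {y}. q y * (p z * Qunif S d z y) / c)"
    proof (intro sum.cong refl)
      fix z assume z: "z \<in> ?X - {y}"
      then have "gen ?X (rev_rate S d q0 T) s z y = Qunif S d z y * q y / q z"
        unfolding gen_def using s y by (simp add: rev_rate_eq q_def Qunif_sym[of S d y z])
      then show "q z * p z / c * gen ?X (rev_rate S d q0 T) s z y = q y * (p z * Qunif S d z y) / c"
        using qp[of z] by (simp add: field_simps)
    qed
    also have "\<dots> = q y * B1 / c" unfolding B1_def by (simp add: sum_divide_distrib sum_distrib_left)
    finally show ?thesis using qp[of y] cp by (simp add: field_simps)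
  qed
  have "(- (\<Sum>z\<in>?X. q z * G z y) * p y + q y * dpr S d (s - l) x y) / c = - (p y * A1) / c + q y * B1 / c"
    unfolding i1 i2 using cp by (simp add: field_simps)
  then have "((\<lambda>s. qq S d q0 (T - s) y * pr S d (s - l) x y / c) has_real_derivative
      (\<Sum>z\<in>?X. Rv S d q0 T l s x z * gen ?X (rev_rate S d q0 T) s z y)) (at s within {l..<T})"
    using dd i3 by (simp add: has_field_derivative_at_within)
  then show "((\<lambda>s. Rv S d q0 T l s x y) has_real_derivative
      (\<Sum>z\<in>?X. Rv S d q0 T l s x z * gen ?X (rev_rate S d q0 T) s z y)) (at s within {l..<T})"
    by (rule has_field_derivative_transform_within[where d=1]) (use s x y in \<open>auto simp: Rv_def c_def\<close>)
qed

lemma rev_cont: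
  assumes b: "b \<in> {l..<T}" and z: "z \<in> states S d" and y: "y \<in> states S d"
  shows "continuous_on {l..b} (\<lambda>s. gen (states S d) (rev_rate S d q0 T) s z y)"
proof -
  have qz: "qq S d q0 (T - s) w \<noteq> 0" if "s \<in> {l..b}" for s w
  proof -
    have "s < T" using that b by auto
    then show ?thesis using qpos[of s w] by simp
  qed
  show ?thesis
proof (cases "z = y")
  case True
  have "continuous_on {l..b} (\<lambda>s. - (\<Sum>w\<in>states S d - {z}. Qunif S d w z * qq S d q0 (T - s) w / qq S d q0 (T - s) z))"
    using qz b z by (intro continuous_intros qq_cont[OF S]) auto
  then show ?thesis
    by (rule continuous_on_cong[THEN iffD1, rotated 2]) (use b True z in \<open>auto simp: gen_def rev_rate_eq intro!: sum.cong\<close>)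
next
  case False
  have "continuous_on {l..b} (\<lambda>s. Qunif S d y z * qq S d q0 (T - s) y / qq S d q0 (T - s) z)"
    using qz b z y by (intro continuous_intros qq_cont[OF S]) auto
  then show ?thesis
    by (rule continuous_on_cong[THEN iffD1, rotated 2]) (use b False z y in \<open>auto simp: gen_def rev_rate_eq\<close>)
qed
qed

lemma rev_cond_eq: "rev_cond S d q0 T l s x y = Rv S d q0 T l s x y"
proof -
  have "transition (states S d) (gen (states S d) (rev_rate S d q0 T)) {l..<T} l = Rv S d q0 T l"
    unfolding transition_def
  proof (rule the1_equality)
    show "is_transition (states S d) (gen (states S d) (rev_rate S d q0 T)) {l..<T} l (Rv S d q0 T l)"
      by (rule Rv_trans)
  next
    show "\<exists>!P. is_transition (states S d) (gen (states S d) (rev_rate S d q0 T)) {l..<T} l P"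
    proof (rule ex1I)
      show "is_transition (states S d) (gen (states S d) (rev_rate S d q0 T)) {l..<T} l (Rv S d q0 T l)"
        by (rule Rv_trans)
    next
      fix P assume "is_transition (states S d) (gen (states S d) (rev_rate S d q0 T)) {l..<T} l P"
      then show "P = Rv S d q0 T l"
        by (rule trans_unique[OF states_fin _ Rv_trans]) (use lT rev_cont in auto)
    qed
  qed
  then show ?thesis unfolding rev_cond_def by simp
qed

end



definition fS :: "nat \<Rightarrow> nat \<Rightarrow> nat \<Rightarrow> nat" where
  "fS S c a = (if (a + c) mod S = 0 then S else (a + c) mod S)"

lemma oplus_fS: "oplus S x i c = x(i := fS S c (x i))"
  unfolding oplus_def fS_def by simp

lemma fS_range: "S \<ge> 1 \<Longrightarrow> fS S c a \<in> {1..S}"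
  unfolding fS_def by (auto simp: Suc_le_eq)

lemma mod_cancel_nat: "(a + c) mod S = (b + c) mod (S::nat) \<Longrightarrow> a mod S = b mod S"
  using nat_mod_eq_iff by auto

lemma mod_inj_nat: "a mod S = b mod (S::nat) \<Longrightarrow> a \<in> {1..S} \<Longrightarrow> b \<in> {1..S} \<Longrightarrow> a = b"
  by (metis atLeastAtMost_iff mod_less mod_self nat_less_le not_one_le_zero)

lemma fS_inj: assumes "a \<in> {1..S}" "b \<in> {1..S}" shows "fS S c a = fS S c b \<longleftrightarrow> a = b"
proof
  assume h: "fS S c a = fS S c b"
  have S: "S \<ge> 1" using assms by auto
  have "(a + c) mod S \<noteq> S" "(b + c) mod S \<noteq> S" using S by (metis less_irrefl mod_less_divisor not_one_le_zero neq0_conv)+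
  then have "(a + c) mod S = (b + c) mod S" using h unfolding fS_def by (auto split: if_splits)
  then show "a = b" using mod_cancel_nat mod_inj_nat assms by blast
qed simp

context
  fixes S d :: nat and i c :: nat
  assumes S: "S \<ge> 1" and i: "i \<in> {1..d}"
begin

lemma oplus_in: "x \<in> states S d \<Longrightarrow> oplus S x i c \<in> states S d"
  unfolding oplus_fS states_def using i fS_range[OF S] by (auto simp: PiE_iff extensional_def)

lemma oplus_inj: "inj_on (\<lambda>x. oplus S x i c) (states S d)"
proof (rule inj_onI)
  fix x y assume x: "x \<in> states S d" and y: "y \<in> states S d" and h: "oplus S x i c = oplus S y i c"
  have xi: "x i \<in> {1..S}" "y i \<in> {1..S}" using x y i unfolding states_def by (auto simp: PiE_iff)
  have "fS S c (x i) = fS S c (y i)" using h unfolding oplus_fS by (metis fun_upd_same)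
  then have "x i = y i" using fS_inj[OF xi] by simp
  moreover have "x j = y j" if "j \<noteq> i" for j using h that unfolding oplus_fS by (metis fun_upd_other)
  ultimately show "x = y" by (metis ext)
qed

lemma oplus_image: "(\<lambda>x. oplus S x i c) ` states S d = states S d"
  using endo_inj_surj[OF states_fin _ oplus_inj] oplus_in by auto

lemma pr_oplus:
  assumes x: "x \<in> states S d" and y: "y \<in> states S d"
  shows "pr S d t (oplus S x i c) (oplus S y i c) = pr S d t x y"
  unfolding pr_def
proof (intro prod.cong refl)
  fix j assume j: "j \<in> {1..d}"
  have xi: "x i \<in> {1..S}" "y i \<in> {1..S}" using x y i unfolding states_def by (auto simp: PiE_iff)
  show "kk S t (oplus S x i c j) (oplus S y i c j) = kk S t (x j) (y j)"
    unfolding oplus_fS kk_def using fS_inj[OF xi, of c] by auto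
qed

end

theorem mainTheorem18:
  fixes S d :: nat and q0 :: "(nat \<Rightarrow> nat) \<Rightarrow> real" and T l t :: real
    and i c :: nat and xl :: "nat \<Rightarrow> nat"
  assumes q0_nonneg: "\<forall>x\<in>states S d. q0 x \<ge> 0"
    and q0_sum: "(\<Sum>x\<in>states S d. q0 x) = 1"
    and T_pos: "T > 0"
    and times: "0 \<le> l" "l < t" "t < T"
    and i_in: "i \<in> {1..d}" and c_in: "c \<in> {1..S}"
    and xl_in: "xl \<in> states S d"
  shows "(\<Sum>xt\<in>states S d. rev_cond S d q0 T l t xl xt * score S d q0 (T - t) (oplus S xt i c) xt)
           = score S d q0 (T - l) (oplus S xl i c) xl
         \<and> (\<forall>g :: (nat \<Rightarrow> nat) \<Rightarrow> real.
              (\<Sum>xt\<in>states S d. rev_cond S d q0 T l t xl xt *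
                 ((score S d q0 (T - l) (oplus S xl i c) xl - score S d q0 (T - t) (oplus S xt i c) xt) * g xl)) = 0)"
proof -
  have S: "S \<ge> 1" using c_in by auto
  have lT: "l < T" using times by auto
  let ?X = "states S d"
  let ?s = "\<lambda>x. oplus S x i c"
  define C where "C = qq S d q0 (T - l) xl"
  have Cp: "C > 0" unfolding C_def using qpos[OF S q0_nonneg q0_sum lT lT] .
  have qt: "qq S d q0 (T - t) w > 0" for w using qpos[OF S q0_nonneg q0_sum lT] times by auto
  have R: "rev_cond S d q0 T l t xl y = qq S d q0 (T - t) y * pr S d (t - l) xl y / C" if "y \<in> ?X" for y
    using rev_cond_eq[OF S q0_nonneg q0_sum lT] times that xl_in unfolding Rv_def C_def by auto
  have sc_t: "score S d q0 (T - t) (?s y) y = qq S d q0 (T - t) (?s y) / qq S d q0 (T - t) y" if "y \<in> ?X" for y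
    unfolding score_def using qlaw_eq[OF S] times that oplus_in[OF S i_in] by auto
  have sc_l: "score S d q0 (T - l) (?s xl) xl = qq S d q0 (T - l) (?s xl) / C"
    unfolding score_def C_def using qlaw_eq[OF S] times xl_in oplus_in[OF S i_in] by auto
  have sum1: "(\<Sum>y\<in>?X. rev_cond S d q0 T l t xl y) = 1"
  proof -
    have "(\<Sum>y\<in>?X. rev_cond S d q0 T l t xl y) = (\<Sum>y\<in>?X. qq S d q0 (T - t) y * pr S d (t - l) y xl) / C"
      by (simp add: R pr_sym[of S d _ xl] sum_divide_distrib cong: sum.cong)
    also have "\<dots> = 1" using qq_ck[OF xl_in] Cp unfolding C_def by simp
    finally show ?thesis .
  qed
  have main: "(\<Sum>y\<in>?X. rev_cond S d q0 T l t xl y * score S d q0 (T - t) (?s y) y)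
      = score S d q0 (T - l) (?s xl) xl"
  proof -
    have "(\<Sum>y\<in>?X. rev_cond S d q0 T l t xl y * score S d q0 (T - t) (?s y) y)
        = (\<Sum>y\<in>?X. pr S d (t - l) (?s xl) (?s y) * qq S d q0 (T - t) (?s y)) / C"
      unfolding sum_divide_distrib
    proof (intro sum.cong refl)
      fix y assume y: "y \<in> ?X"
      show "rev_cond S d q0 T l t xl y * score S d q0 (T - t) (?s y) y
          = pr S d (t - l) (?s xl) (?s y) * qq S d q0 (T - t) (?s y) / C"
        using qt[of y] Cp by (simp add: R[OF y] sc_t[OF y] pr_oplus[OF S i_in xl_in y])
    qed
    also have "(\<Sum>y\<in>?X. pr S d (t - l) (?s xl) (?s y) * qq S d q0 (T - t) (?s y))
        = (\<Sum>y\<in>?X. pr S d (t - l) (?s xl) y * qq S d q0 (T - t) y)"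
      using sum.reindex[OF oplus_inj[OF S i_in], of "\<lambda>y. pr S d (t - l) (?s xl) y * qq S d q0 (T - t) y"]
      unfolding oplus_image[OF S i_in] by (simp add: o_def)
    also have "\<dots> = (\<Sum>y\<in>?X. qq S d q0 (T - t) y * pr S d (t - l) y (?s xl))"
      by (simp add: pr_sym[of S d _ "?s xl"] mult.commute)
    also have "\<dots> = qq S d q0 (T - l) (?s xl)"
      using qq_ck[OF oplus_in[OF S i_in xl_in]] by simp
    finally show ?thesis using sc_l by simp
  qed
  show ?thesis
  proof (intro conjI allI)
    show "(\<Sum>y\<in>?X. rev_cond S d q0 T l t xl y * score S d q0 (T - t) (?s y) y)
        = score S d q0 (T - l) (?s xl) xl" by (rule main)
  next
    fix g :: "(nat \<Rightarrow> nat) \<Rightarrow> real"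
    let ?a = "score S d q0 (T - l) (?s xl) xl"
    have "(\<Sum>y\<in>?X. rev_cond S d q0 T l t xl y * ((?a - score S d q0 (T - t) (?s y) y) * g xl))
        = g xl * (?a * (\<Sum>y\<in>?X. rev_cond S d q0 T l t xl y)
            - (\<Sum>y\<in>?X. rev_cond S d q0 T l t xl y * score S d q0 (T - t) (?s y) y))"
      by (simp add: sum_distrib_left sum_distrib_right sum_subtractf algebra_simps)
    also have "\<dots> = 0" using main sum1 by simp
    finally show "(\<Sum>y\<in>?X. rev_cond S d q0 T l t xl y * ((?a - score S d q0 (T - t) (?s y) y) * g xl)) = 0" .
  qed
qed


end
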